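(* Let $\alpha=(\alpha_1,\dots,\alpha_L)$ be a weak composition, $n$ a positive integer and $B\in\mathrm{GMLQ}(\alpha,n)$ with labelling $L_G(B)$. Then: (i) within each row of $L_G(B)$, the largest label of an anti-particle is strictly smaller than the smallest label of a particle; (ii) if $\alpha_1\ge\alpha_2\ge\cdots\ge\alpha_L$, then the labels of the particles in $L_G(B)$ coincide with the Ferrari–Martin labels of $B$, and for each $1\le r\le L$ every anti-particle in row $r$ of $L_G(B)$ has label $r-1$.
   Context: $\mathrm{GMLQ}(\alpha,n)$ is the set of tuples $B=(B_1,\dots,B_L)$ of subsets of $[n]$ with $|B_j|=\alpha_j$, drawn with rows $1..L$ bottom to top and columns $1..n$ left to right; cells $(r,j)$ with $j\in B_r$ are particles (balls), the others anti-particles. Labelling $L_G(B)$: row $L$: particles get label $L$, anti-particles $L-1$. For $r=L-1,\dots,1$: with $w_1,\dots,w_n$ the labels of row $r+1$, order the columns $i_1,\dots,i_n$ so that $w_{i_1}\ge\cdots\ge w_{i_n}$, ties by increasing column index; let $s=|B_r|$. Particle phase: for $k=1,\dots,s$, the first unlabelled particle of row $r$ weakly to the right of column $i_k$ cyclically ($i_k,i_k+1,\dots,n,1,\dots$) gets label $w_{i_k}$. Anti-particle phase: for $k=n,n-1,\dots,s+1$, the first unlabelled anti-particle of row $r$ weakly to the left of column $i_k$ cyclically ($i_k,i_k-1,\dots,1,n,\dots$) gets label $w_{i_k}-1$. Ferrari–Martin labels (for $\alpha$ weakly decreasing): for $r=L,\dots,2$, every unlabelled ball of row $r$ gets label $r$;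 then the balls of row $r$, in decreasing label order (left to right among ties), are each paired with the first unlabelled ball of row $r-1$ weakly to the right cyclically modulo $n$, which gets the same label; finally unlabelled balls of row 1 get label 1. *)

theory Defs
  imports Main "HOL-Library.Product_Lexorder"
begin

text \<open>Configurations: a list B of length L; row r (1-based) is B ! (r-1), a subset of {1..n}.\<close>

definition GMLQ :: "nat list \<Rightarrow> nat \<Rightarrow> nat set list set" where
  "GMLQ \<alpha> n = {B. length B = length \<alpha> \<and>
      (\<forall>r < length \<alpha>. B ! r \<subseteq> {1..n} \<and> card (B ! r) = \<alpha> ! r)}"

definition cyc_right :: "nat \<Rightarrow> nat \<Rightarrow> nat list" where
  "cyc_right n i = [i..<n+1] @ [1..<i]"

definition cyc_left :: "nat \<Rightarrow> nat \<Rightarrow> nat list" where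
  "cyc_left n i = rev [1..<i+1] @ rev [i+1..<n+1]"

definition col_order :: "nat \<Rightarrow> (nat \<Rightarrow> int) \<Rightarrow> nat list" where
  "col_order n w = sort_key (\<lambda>i. (- w i, i)) [1..<n+1]"

definition place_particle :: "nat \<Rightarrow> nat set \<Rightarrow> (nat \<Rightarrow> int) \<Rightarrow> (nat \<rightharpoonup> int) \<Rightarrow> nat \<Rightarrow> (nat \<rightharpoonup> int)" where
  "place_particle n S w lab i =
     (case find (\<lambda>j. j \<in> S \<and> lab j = None) (cyc_right n i) of
        Some j \<Rightarrow> lab(j \<mapsto> w i) | None \<Rightarrow> lab)"

definition place_anti :: "nat \<Rightarrow> nat set \<Rightarrow> (nat \<Rightarrow> int) \<Rightarrow> (nat \<rightharpoonup> int) \<Rightarrow> nat \<Rightarrow> (nat \<rightharpoonup> int)" where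
  "place_anti n S w lab i =
     (case find (\<lambda>j. j \<notin> S \<and> lab j = None) (cyc_left n i) of
        Some j \<Rightarrow> lab(j \<mapsto> w i - 1) | None \<Rightarrow> lab)"

text \<open>Labels of row r from the labels w of row r+1 and the particle set S of row r.\<close>
definition row_step :: "nat \<Rightarrow> (nat \<Rightarrow> int) \<Rightarrow> nat set \<Rightarrow> (nat \<Rightarrow> int)" where
  "row_step n w S =
     (let ord = col_order n w; s = card S;
          lab1 = fold (\<lambda>i lab. place_particle n S w lab i) (take s ord) Map.empty;
          lab2 = fold (\<lambda>i lab. place_anti n S w lab i) (rev (drop s ord)) lab1
      in (\<lambda>j. case lab2 j of Some x \<Rightarrow> x | None \<Rightarrow> 0))"

text \<open>LG n B r j: label of cell (r,j) in the labelling L_G(B), rows 1..length B.\<close>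
function LG :: "nat \<Rightarrow> nat set list \<Rightarrow> nat \<Rightarrow> nat \<Rightarrow> int" where
  "LG n B r = (if length B \<le> r
      then (\<lambda>j. if j \<in> B ! (length B - 1) then int (length B) else int (length B) - 1)
      else row_step n (LG n B (Suc r)) (B ! (r - 1)))"
  by pat_completeness auto
termination by (relation "measure (\<lambda>(n, B, r). length B - r)") auto

definition fm_place :: "nat \<Rightarrow> nat set \<Rightarrow> (nat \<Rightarrow> int) \<Rightarrow> (nat \<rightharpoonup> int) \<Rightarrow> nat \<Rightarrow> (nat \<rightharpoonup> int)" where
  "fm_place n S w m i =
     (case find (\<lambda>j. j \<in> S \<and> m j = None) (cyc_right n i) of
        Some j \<Rightarrow> m(j \<mapsto> w i) | None \<Rightarrow> m)"

text \<open>FM n B r j: Ferrari--Martin label of the ball at (r,j) (meaningful for j \<in> B ! (r-1)).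
  Balls of row r not reached by the pairing from row r+1 get label r.\<close>
function FM :: "nat \<Rightarrow> nat set list \<Rightarrow> nat \<Rightarrow> nat \<Rightarrow> int" where
  "FM n B r = (if length B \<le> r then (\<lambda>j. int r)
      else (let w = FM n B (Suc r);
                m = fold (\<lambda>i m. fm_place n (B ! (r - 1)) w m i)
                      (sort_key (\<lambda>i. (- w i, i)) (sorted_list_of_set (B ! r))) Map.empty
            in (\<lambda>j. case m j of Some x \<Rightarrow> x | None \<Rightarrow> int r)))"
  by pat_completeness auto
termination by (relation "measure (\<lambda>(n, B, r). length B - r)") auto

end

theory Submission
  imports Defs
begin

lemma find_SomeD': "List.find P xs = Some x \<Longrightarrow> x \<in> set xs \<and> P x"
  by (induction xs) (auto split: if_splits)

definition gplace :: "(nat \<Rightarrow> bool) \<Rightarrow> (nat \<Rightarrow> nat list) \<Rightarrow> (nat \<Rightarrow> int) \<Rightarrow> (nat \<rightharpoonup> int) \<Rightarrow> nat \<Rightarrow> (nat \<rightharpoonup> int)" where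
  "gplace P c v lab i = (case find (\<lambda>j. P j \<and> lab j = None) (c i) of
        Some j \<Rightarrow> lab(j \<mapsto> v i) | None \<Rightarrow> lab)"

lemma pp_gplace: "place_particle n S w = gplace (\<lambda>j. j \<in> S) (cyc_right n) w"
  by (intro ext) (simp add: place_particle_def gplace_def)

lemma pa_gplace: "place_anti n S w = gplace (\<lambda>j. j \<notin> S) (cyc_left n) (\<lambda>i. w i - 1)"
  by (intro ext) (simp add: place_anti_def gplace_def)

lemma G1: "lab j = Some x \<Longrightarrow> fold (\<lambda>i lab. gplace P c v lab i) xs lab j = Some x"
proof (induction xs arbitrary: lab)
  case (Cons a xs)
  have "gplace P c v lab a j = Some x"
    using Cons.prems by (auto simp: gplace_def split: option.splits dest!: find_SomeD')
  then show ?case using Cons.IH by simp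
qed simp

lemma G2: "fold (\<lambda>i lab. gplace P c v lab i) xs lab j = Some x \<Longrightarrow> lab j = None \<Longrightarrow>
   \<exists>i\<in>set xs. j \<in> set (c i) \<and> P j \<and> x = v i"
proof (induction xs arbitrary: lab)
  case (Cons a xs)
  show ?case
  proof (cases "gplace P c v lab a j")
    case None
    then show ?thesis using Cons by auto
  next
    case (Some y)
    then have "j \<in> set (c a) \<and> P j \<and> y = v a"
      using Cons.prems by (auto simp: gplace_def split: option.splits if_splits dest!: find_SomeD')
    moreover have "fold (\<lambda>i lab. gplace P c v lab i) xs (gplace P c v lab a) j = Some y"
      using G1 Some by metis
    ultimately show ?thesis using Cons.prems by auto
  qed
qed simp

lemma G3:
  assumes "finite T" "\<forall>i\<in>set xs. {j\<in>set (c i). P j} = T"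
    "card (T \<inter> dom lab) + length xs \<le> card T"
  shows "card (T \<inter> dom (fold (\<lambda>i lab. gplace P c v lab i) xs lab)) = card (T \<inter> dom lab) + length xs"
  using assms(2,3)
proof (induction xs arbitrary: lab)
  case (Cons a xs)
  have Ta: "{j\<in>set (c a). P j} = T" using Cons.prems by auto
  have "card (T \<inter> dom lab) < card T" using Cons.prems by simp
  then have "\<not> T \<subseteq> dom lab"
    by (metis Int_absorb2 less_irrefl)
  then obtain j where j: "j \<in> T" "lab j = None" by auto
  then have "find (\<lambda>j. P j \<and> lab j = None) (c a) \<noteq> None"
    using Ta by (auto simp: find_None_iff)
  then obtain j' where j': "find (\<lambda>j. P j \<and> lab j = None) (c a) = Some j'" by auto
  then have j'': "j' \<in> T" "lab j' = None" using Ta find_SomeD'[OF j'] by auto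
  have g: "gplace P c v lab a = lab(j' \<mapsto> v a)" using j' by (simp add: gplace_def)
  have "T \<inter> dom (gplace P c v lab a) = insert j' (T \<inter> dom lab)"
    using g j'' by auto
  then have cd: "card (T \<inter> dom (gplace P c v lab a)) = Suc (card (T \<inter> dom lab))"
    using j'' assms(1) by (metis (no_types, lifting) IntE card_insert_disjoint domIff finite_Int)
  show ?case using Cons.IH[of "gplace P c v lab a"] Cons.prems cd by simp
qed simp

lemma G3':
  assumes "finite T" "\<forall>i\<in>set xs. {j\<in>set (c i). P j} = T"
    "card (T \<inter> dom lab) + length xs = card T"
  shows "T \<subseteq> dom (fold (\<lambda>i lab. gplace P c v lab i) xs lab)"
proof -
  have "card (T \<inter> dom (fold (\<lambda>i lab. gplace P c v lab i) xs lab)) = card T"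
    using G3[OF assms(1,2)] assms(3) by simp
  then show ?thesis using assms(1)
    by (metis Int_lower1 card_subset_eq inf.absorb_iff1)
qed

lemma set_cyc_right: "1 \<le> i \<Longrightarrow> i \<le> n \<Longrightarrow> set (cyc_right n i) = {1..n}"
  by (auto simp: cyc_right_def)

lemma set_cyc_left: "1 \<le> i \<Longrightarrow> i \<le> n \<Longrightarrow> set (cyc_left n i) = {1..n}"
  by (auto simp: cyc_left_def)


lemma col_order_props:
  "set (col_order n w) = {1..n}" "length (col_order n w) = n" "distinct (col_order n w)"
  by (auto simp: col_order_def)

lemma row_step_part:
  assumes S: "S \<subseteq> {1..n}" and j: "j \<in> S"
  shows "\<exists>x. fold (\<lambda>i lab. place_particle n S w lab i) (take (card S) (col_order n w)) Map.empty j = Some x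
            \<and> row_step n w S j = x"
proof -
  define ord where "ord = col_order n w"
  define s where "s = card S"
  define lab1 where "lab1 = fold (\<lambda>i lab. gplace (\<lambda>j. j \<in> S) (cyc_right n) w lab i) (take s ord) Map.empty"
  define lab2 where "lab2 = fold (\<lambda>i lab. gplace (\<lambda>j. j \<notin> S) (cyc_left n) (\<lambda>i. w i - 1) lab i) (rev (drop s ord)) lab1"
  have fS: "finite S" using S finite_subset by blast
  have sn: "s \<le> n" using S unfolding s_def by (metis card_atLeastAtMost card_mono diff_Suc_1 finite_atLeastAtMost)
  have "S \<subseteq> dom lab1" unfolding lab1_def
  proof (rule G3'[OF fS])
    show "\<forall>i\<in>set (take s ord). {j \<in> set (cyc_right n i). j \<in> S} = S"
      using S by (auto simp: ord_def col_order_props dest!: in_set_takeD simp: set_cyc_right)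
    show "card (S \<inter> dom Map.empty) + length (take s ord) = card S"
      using sn by (simp add: ord_def col_order_props s_def)
  qed
  then obtain x where x: "lab1 j = Some x" using j by auto
  then have "lab2 j = Some x" unfolding lab2_def by (rule G1)
  then show ?thesis using x
    by (simp add: row_step_def Let_def pp_gplace pa_gplace lab1_def lab2_def ord_def s_def)
qed

lemma row_step_anti:
  assumes S: "S \<subseteq> {1..n}" and j: "j \<in> {1..n} - S"
  shows "\<exists>i\<in>set (drop (card S) (col_order n w)). row_step n w S j = w i - 1"
proof -
  define ord where "ord = col_order n w"
  define s where "s = card S"
  define lab1 where "lab1 = fold (\<lambda>i lab. gplace (\<lambda>j. j \<in> S) (cyc_right n) w lab i) (take s ord) Map.empty"
  define lab2 where "lab2 = fold (\<lambda>i lab. gplace (\<lambda>j. j \<notin> S) (cyc_left n) (\<lambda>i. w i - 1) lab i) (rev (drop s ord)) lab1"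
  have fS: "finite S" using S finite_subset by blast
  have sn: "s \<le> n" using S unfolding s_def by (metis card_atLeastAtMost card_mono diff_Suc_1 finite_atLeastAtMost)
  have d1: "dom lab1 \<subseteq> S"
  proof
    fix k assume "k \<in> dom lab1"
    then obtain y where "lab1 k = Some y" by auto
    from G2[OF this[unfolded lab1_def]] show "k \<in> S" by auto
  qed
  have "{1..n} - S \<subseteq> dom lab2" unfolding lab2_def
  proof (rule G3')
    show "\<forall>i\<in>set (rev (drop s ord)). {j \<in> set (cyc_left n i). j \<notin> S} = {1..n} - S"
      using S by (auto simp: ord_def col_order_props dest!: in_set_dropD simp: set_cyc_left)
    have "card ({1..n} - S) = n - s" using S fS by (simp add: card_Diff_subset s_def)
    moreover have "({1..n} - S) \<inter> dom lab1 = {}" using d1 by auto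
    ultimately show "card (({1..n} - S) \<inter> dom lab1) + length (rev (drop s ord)) = card ({1..n} - S)"
      by (simp add: ord_def col_order_props)
  qed simp
  then obtain x where x: "lab2 j = Some x" using j by auto
  have "lab1 j = None" using d1 j by auto
  from G2[OF x[unfolded lab2_def] this] obtain i where i: "i \<in> set (drop s ord)" "x = w i - 1" by auto
  have "row_step n w S j = x" using x
    by (simp add: row_step_def Let_def pp_gplace pa_gplace lab1_def lab2_def ord_def s_def)
  then show ?thesis using i by (auto simp: ord_def s_def)
qed

lemma row_step_part_val:
  assumes S: "S \<subseteq> {1..n}" and j: "j \<in> S"
  shows "\<exists>i\<in>set (take (card S) (col_order n w)). row_step n w S j = w i"
proof -
  obtain x where x: "fold (\<lambda>i lab. place_particle n S w lab i) (take (card S) (col_order n w)) Map.empty j = Some x"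
     "row_step n w S j = x" using row_step_part[OF S j] by blast
  from G2[OF x(1)[unfolded pp_gplace]] x(2) show ?thesis by auto
qed

lemma col_order_sorted:
  "i \<in> set (take k (col_order n w)) \<Longrightarrow> i' \<in> set (drop k (col_order n w)) \<Longrightarrow> w i' \<le> w i"
proof -
  assume a: "i \<in> set (take k (col_order n w))" "i' \<in> set (drop k (col_order n w))"
  have "sorted (map (\<lambda>i. (- w i, i)) (col_order n w))" by (simp add: col_order_def)
  then have "sorted (map (\<lambda>i. (- w i, i)) (take k (col_order n w)) @ map (\<lambda>i. (- w i, i)) (drop k (col_order n w)))"
    by (metis append_take_drop_id map_append)
  then have "(- w i, i) \<le> (- w i', i')" using a by (auto simp: sorted_append)
  then show ?thesis by (auto simp: less_eq_prod_def)
qed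

lemma row_step_sep:
  assumes S: "S \<subseteq> {1..n}" and j: "j \<in> S" and j': "j' \<in> {1..n} - S"
  shows "row_step n w S j' < row_step n w S j"
proof -
  obtain i where i: "i\<in>set (take (card S) (col_order n w))" "row_step n w S j = w i"
    using row_step_part_val[OF S j] by blast
  obtain i' where i': "i'\<in>set (drop (card S) (col_order n w))" "row_step n w S j' = w i' - 1"
    using row_step_anti[OF S j'] by blast
  show ?thesis using col_order_sorted[OF i(1) i'(1)] i i' by simp
qed


declare LG.simps[simp del] FM.simps[simp del]

lemma LG_top: "length B \<le> r \<Longrightarrow> LG n B r = (\<lambda>j. if j \<in> B ! (length B - 1) then int (length B) else int (length B) - 1)"
  by (subst LG.simps) simp

lemma LG_step: "r < length B \<Longrightarrow> LG n B r = row_step n (LG n B (Suc r)) (B ! (r - 1))"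
  by (subst LG.simps) simp

lemma FM_top: "length B \<le> r \<Longrightarrow> FM n B r = (\<lambda>j. int r)"
  by (subst FM.simps) simp

lemma FM_step: "r < length B \<Longrightarrow> FM n B r = (\<lambda>j. case fold (\<lambda>i m. fm_place n (B ! (r - 1)) (FM n B (Suc r)) m i)
                      (sort_key (\<lambda>i. (- FM n B (Suc r) i, i)) (sorted_list_of_set (B ! r))) Map.empty j of Some x \<Rightarrow> x | None \<Rightarrow> int r)"
  by (subst FM.simps) (simp add: Let_def)

lemma sorted_key_unique:
  fixes f :: "'a \<Rightarrow> 'b::linorder"
  assumes "inj f" "sorted_wrt (\<lambda>a b. f a < f b) xs" "sorted_wrt (\<lambda>a b. f a < f b) ys" "set xs = set ys"
  shows "xs = ys"
proof -
  have a: "sorted_wrt (<) (map f xs)" "sorted_wrt (<) (map f ys)" using assms(2,3) by (simp_all add: sorted_wrt_map)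
  have "map f xs = map f ys"
    using sorted_distinct_set_unique[of "map f xs" "map f ys"] a strict_sorted_iff assms(4)
    by (metis list.set_map)
  then show ?thesis using assms(1) by simp
qed

lemma strict_of_sorted:
  fixes f :: "'a \<Rightarrow> 'b::linorder"
  assumes "inj f" "sorted (map f xs)" "distinct xs"
  shows "sorted_wrt (\<lambda>a b. f a < f b) xs"
proof -
  have "distinct (map f xs)" using assms by (simp add: distinct_map inj_on_subset[OF assms(1)])
  then have "sorted_wrt (<) (map f xs)" using assms(2) strict_sorted_iff by blast
  then show ?thesis by (simp add: sorted_wrt_map)
qed


lemma step2:
  assumes S: "S \<subseteq> {1..n}" and S': "S' \<subseteq> {1..n}" and cs: "card S' \<le> card S"
    and IHp: "\<forall>i\<in>S'. w i = wF i \<and> int r + 1 \<le> w i"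
    and IHa: "\<forall>i\<in>{1..n} - S'. w i = int r"
  shows "(\<forall>j\<in>S. row_step n w S j = (case fold (\<lambda>i m. fm_place n S wF m i)
                      (sort_key (\<lambda>i. (- wF i, i)) (sorted_list_of_set S')) Map.empty j of Some x \<Rightarrow> x | None \<Rightarrow> int r)
                \<and> int r \<le> row_step n w S j)
       \<and> (\<forall>j\<in>{1..n} - S. row_step n w S j = int r - 1)"
proof -
  define f where "f = (\<lambda>i::nat. (- w i, i))"
  define ord where "ord = col_order n w"
  define s where "s = card S"
  define P' where "P' = filter (\<lambda>i. i \<in> S') ord"
  define Q' where "Q' = filter (\<lambda>i. i \<notin> S') ord"
  define PF where "PF = sort_key (\<lambda>i. (- wF i, i)) (sorted_list_of_set S')"
  have fS': "finite S'" using S' finite_subset by blast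
  have injf: "inj f" by (auto simp: inj_def f_def)
  have ordS: "sorted_wrt (\<lambda>a b. f a < f b) ord"
    by (rule strict_of_sorted[OF injf]) (auto simp: ord_def col_order_def f_def)
  have P'S: "sorted_wrt (\<lambda>a b. f a < f b) P'" using ordS by (simp add: P'_def sorted_wrt_filter)
  have Q'S: "sorted_wrt (\<lambda>a b. f a < f b) Q'" using ordS by (simp add: Q'_def sorted_wrt_filter)
  have setP': "set P' = S'" using S' by (auto simp: P'_def ord_def col_order_props)
  have setQ': "set Q' = {1..n} - S'" by (auto simp: Q'_def ord_def col_order_props)
  have ord_split: "ord = P' @ Q'"
  proof (rule sorted_key_unique[OF injf ordS])
    show "sorted_wrt (\<lambda>a b. f a < f b) (P' @ Q')"
      unfolding sorted_wrt_append using P'S Q'S setP' setQ' IHp IHa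
      by (fastforce simp: f_def)
    show "set ord = set (P' @ Q')" using setP' setQ' S' by (auto simp: ord_def col_order_props)
  qed
  have PF_eq: "PF = P'"
  proof (rule sorted_key_unique[OF injf _ P'S])
    have "sorted (map (\<lambda>i. (- wF i, i)) PF)" by (simp add: PF_def)
    moreover have "map (\<lambda>i. (- wF i, i)) PF = map f PF"
      using IHp fS' by (auto simp: PF_def f_def)
    moreover have "distinct PF" by (simp add: PF_def)
    ultimately show "sorted_wrt (\<lambda>a b. f a < f b) PF" using strict_of_sorted[OF injf] by metis
    show "set PF = set P'" using setP' fS' by (simp add: PF_def)
  qed
  have distP': "distinct P'" using col_order_props(3) by (simp add: P'_def ord_def)
  have lenP': "length P' = card S'" using distinct_card[OF distP'] setP' by simp
  define Qt where "Qt = take (s - length P') Q'"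
  have take_eq: "take s ord = P' @ Qt"
    using ord_split lenP' cs by (simp add: Qt_def s_def)
  define m where "m = fold (\<lambda>i lab. place_particle n S w lab i) P' Map.empty"
  have m_eq: "fold (\<lambda>i m. fm_place n S wF m i) PF Map.empty = m"
    unfolding m_def PF_eq
  proof (rule fold_cong)
    fix x assume "x \<in> set P'"
    then have "wF x = w x" using IHp setP' by auto
    then show "(\<lambda>m. fm_place n S wF m x) = (\<lambda>lab. place_particle n S w lab x)"
      unfolding fm_place_def place_particle_def by (rule arg_cong[where f="\<lambda>v. (\<lambda>lab. case find (\<lambda>j. j \<in> S \<and> lab j = None) (cyc_right n x) of Some j \<Rightarrow> lab(j \<mapsto> v) | None \<Rightarrow> lab)"])
  qed simp_all
  have partp: "\<forall>j\<in>S. row_step n w S j = (case m j of Some x \<Rightarrow> x | None \<Rightarrow> int r)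
                \<and> int r \<le> row_step n w S j"
  proof
    fix j assume j: "j \<in> S"
    obtain x where x: "fold (\<lambda>i lab. place_particle n S w lab i) (take s ord) Map.empty j = Some x"
      "row_step n w S j = x" using row_step_part[OF S j] unfolding s_def ord_def by blast
    have x': "fold (\<lambda>i lab. place_particle n S w lab i) Qt m j = Some x"
      using x(1) unfolding take_eq m_def by simp
    show "row_step n w S j = (case m j of Some x \<Rightarrow> x | None \<Rightarrow> int r) \<and> int r \<le> row_step n w S j"
    proof (cases "m j")
      case None
      from G2[OF x'[unfolded pp_gplace] None] obtain i where "i \<in> set Qt" "x = w i" by auto
      then have "i \<in> set Q'" "x = w i" by (auto simp: Qt_def dest: in_set_takeD)
      then have "x = int r" using setQ' IHa by auto
      then show ?thesis using None x by simp
    next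
      case (Some y)
      have "fold (\<lambda>i lab. place_particle n S w lab i) Qt m j = Some y"
        using G1[of m j y] Some by (simp add: pp_gplace)
      then have xy: "x = y" using x' by simp
      from G2[OF Some[unfolded m_def pp_gplace]] obtain i where "i \<in> set P'" "y = w i" by auto
      then have "int r \<le> y" using setP' IHp by fastforce
      then show ?thesis using Some x xy by simp
    qed
  qed
  have parta: "\<forall>j\<in>{1..n} - S. row_step n w S j = int r - 1"
  proof
    fix j assume j: "j \<in> {1..n} - S"
    obtain i where i: "i \<in> set (drop s ord)" "row_step n w S j = w i - 1"
      using row_step_anti[OF S j] unfolding s_def ord_def by blast
    have "i \<notin> set (take s ord)"
      using set_take_disj_set_drop_if_distinct[of ord s s] i(1) col_order_props(3) by (auto simp: ord_def)
    then have "i \<notin> S'" using take_eq setP' by auto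
    moreover have "i \<in> {1..n}" using i(1) by (auto simp: ord_def col_order_props dest: in_set_dropD)
    ultimately show "row_step n w S j = int r - 1" using IHa i by auto
  qed
  show ?thesis unfolding PF_def[symmetric] m_eq using partp parta by blast
qed


lemma row_sub: "B \<in> GMLQ \<alpha> n \<Longrightarrow> r < length \<alpha> \<Longrightarrow> B ! r \<subseteq> {1..n}"
  by (simp add: GMLQ_def)

lemma part2:
  assumes G: "B \<in> GMLQ \<alpha> n" and srt: "sorted_wrt (\<ge>) \<alpha>"
  shows "1 \<le> r \<Longrightarrow> r \<le> length \<alpha> \<Longrightarrow>
    (\<forall>j\<in>B ! (r - 1). LG n B r j = FM n B r j \<and> int r \<le> LG n B r j)
    \<and> (\<forall>j\<in>{1..n} - B ! (r - 1). LG n B r j = int r - 1)"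
proof (induction "length \<alpha> - r" arbitrary: r)
  case 0
  have L: "length B = length \<alpha>" using G by (simp add: GMLQ_def)
  then have r: "r = length B" using 0 by simp
  show ?case using r by (simp add: LG_top FM_top)
next
  case (Suc k)
  have L: "length B = length \<alpha>" using G by (simp add: GMLQ_def)
  have rl: "r < length \<alpha>" using Suc by simp
  have IH: "(\<forall>j\<in>B ! r. LG n B (Suc r) j = FM n B (Suc r) j \<and> int (Suc r) \<le> LG n B (Suc r) j)
    \<and> (\<forall>j\<in>{1..n} - B ! r. LG n B (Suc r) j = int (Suc r) - 1)"
  proof -
    have k: "k = length \<alpha> - Suc r" using Suc.hyps(2) by simp
    have "1 \<le> Suc r" "Suc r \<le> length \<alpha>" using rl by auto
    from Suc.hyps(1)[OF k this] show ?thesis by (simp only: diff_Suc_1)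
  qed
  have S: "B ! (r - 1) \<subseteq> {1..n}" using row_sub[OF G, of "r - 1"] rl by simp
  have S': "B ! r \<subseteq> {1..n}" using row_sub[OF G rl] .
  have "\<alpha> ! r \<le> \<alpha> ! (r - 1)"
    using sorted_wrt_nth_less[OF srt, of "r - 1" r] rl Suc.prems by simp
  then have cs: "card (B ! r) \<le> card (B ! (r - 1))" using G rl by (simp add: GMLQ_def)
  have st: "(\<forall>j\<in>B ! (r - 1). row_step n (LG n B (Suc r)) (B ! (r - 1)) j = (case fold (\<lambda>i m. fm_place n (B ! (r - 1)) (FM n B (Suc r)) m i)
                      (sort_key (\<lambda>i. (- FM n B (Suc r) i, i)) (sorted_list_of_set (B ! r))) Map.empty j of Some x \<Rightarrow> x | None \<Rightarrow> int r)
                \<and> int r \<le> row_step n (LG n B (Suc r)) (B ! (r - 1)) j)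
       \<and> (\<forall>j\<in>{1..n} - B ! (r - 1). row_step n (LG n B (Suc r)) (B ! (r - 1)) j = int r - 1)"
    by (rule step2[OF S S' cs]) (use IH in auto)
  have rB: "r < length B" using rl L by simp
  show ?case unfolding LG_step[OF rB] FM_step[OF rB] using st by blast
qed

theorem lemma3p29:
  fixes \<alpha> :: "nat list" and n :: nat and B :: "nat set list"
  assumes "n > 0" and "B \<in> GMLQ \<alpha> n"
  shows "(\<forall>r \<in> {1..length \<alpha>}. \<forall>j \<in> B ! (r - 1). \<forall>j' \<in> {1..n} - B ! (r - 1).
            LG n B r j' < LG n B r j)
       \<and> (sorted_wrt (\<ge>) \<alpha> \<longrightarrow>
            (\<forall>r \<in> {1..length \<alpha>}.
               (\<forall>j \<in> B ! (r - 1). LG n B r j = FM n B r j)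
             \<and> (\<forall>j \<in> {1..n} - B ! (r - 1). LG n B r j = int r - 1)))"
proof (intro conjI impI ballI)
  fix r j j' assume r: "r \<in> {1..length \<alpha>}" and j: "j \<in> B ! (r - 1)" and j': "j' \<in> {1..n} - B ! (r - 1)"
  have L: "length B = length \<alpha>" using assms(2) by (simp add: GMLQ_def)
  show "LG n B r j' < LG n B r j"
  proof (cases "length B \<le> r")
    case True
    then have "r = length B" using r L by simp
    then show ?thesis using True j j' by (simp add: LG_top)
  next
    case False
    have "r - 1 < length \<alpha>" using r by auto
    then have S: "B ! (r - 1) \<subseteq> {1..n}" using row_sub[OF assms(2), of "r - 1"] by blast
    have rB: "r < length B" using False by simp
    show ?thesis unfolding LG_step[OF rB] using row_step_sep[OF S j j'] .
  qed
next
  fix r j assume srt: "sorted_wrt (\<ge>) \<alpha>" and r: "r \<in> {1..length \<alpha>}" and j: "j \<in> B ! (r - 1)"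
  show "LG n B r j = FM n B r j" using part2[OF assms(2) srt, of r] r j by auto
next
  fix r j assume srt: "sorted_wrt (\<ge>) \<alpha>" and r: "r \<in> {1..length \<alpha>}" and j: "j \<in> {1..n} - B ! (r - 1)"
  show "LG n B r j = int r - 1" using part2[OF assms(2) srt, of r] r j by auto
qed

end
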